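(* Let $G$ be a finite simple undirected graph on $n\geq 3$ vertices satisfying: (a) $\delta(G)\geq \frac{n-1}{2}$; (b) $G$ has no perfect matching; (c) $G$ is triangle-free (contains no cycle of length $3$). Then $G$ is isomorphic either to the cycle $C_5$ or to the complete bipartite graph $K_{\frac{n-1}{2},\frac{n+1}{2}}$.
   Context: $\delta(G)$ denotes the minimum vertex degree of $G$. $C_5$ is the cycle on $5$ vertices. $K_{m,p}$ denotes the complete bipartite graph with parts of sizes $m$ and $p$. A triangle is a cycle of length $3$. *)

theory Defs
  imports Complex_Main
begin

definition simple_graph :: "'a set \<Rightarrow> ('a \<Rightarrow> 'a \<Rightarrow> bool) \<Rightarrow> bool" where
  "simple_graph V E \<longleftrightarrow> finite V \<and>
     (\<forall>u v. E u v \<longrightarrow> u \<in> V \<and> v \<in> V \<and> u \<noteq> v \<and> E v u)"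

definition degree :: "'a set \<Rightarrow> ('a \<Rightarrow> 'a \<Rightarrow> bool) \<Rightarrow> 'a \<Rightarrow> nat" where
  "degree V E v = card {u \<in> V. E v u}"

definition min_degree :: "'a set \<Rightarrow> ('a \<Rightarrow> 'a \<Rightarrow> bool) \<Rightarrow> nat" where
  "min_degree V E = Min ((\<lambda>v. degree V E v) ` V)"

definition perfect_matching :: "'a set \<Rightarrow> ('a \<Rightarrow> 'a \<Rightarrow> bool) \<Rightarrow> 'a set set \<Rightarrow> bool" where
  "perfect_matching V E M \<longleftrightarrow>
     (\<forall>e\<in>M. \<exists>u v. e = {u, v} \<and> E u v) \<and>
     (\<forall>e\<in>M. \<forall>f\<in>M. e \<noteq> f \<longrightarrow> e \<inter> f = {}) \<and>
     \<Union>M = V"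

definition has_perfect_matching :: "'a set \<Rightarrow> ('a \<Rightarrow> 'a \<Rightarrow> bool) \<Rightarrow> bool" where
  "has_perfect_matching V E \<longleftrightarrow> (\<exists>M. perfect_matching V E M)"

definition triangle_free :: "'a set \<Rightarrow> ('a \<Rightarrow> 'a \<Rightarrow> bool) \<Rightarrow> bool" where
  "triangle_free V E \<longleftrightarrow>
     \<not> (\<exists>u\<in>V. \<exists>v\<in>V. \<exists>w\<in>V. E u v \<and> E v w \<and> E w u)"

definition graph_iso :: "'a set \<Rightarrow> ('a \<Rightarrow> 'a \<Rightarrow> bool) \<Rightarrow> 'b set \<Rightarrow> ('b \<Rightarrow> 'b \<Rightarrow> bool) \<Rightarrow> bool" where
  "graph_iso V E V' E' \<longleftrightarrow>
     (\<exists>f. bij_betw f V V' \<and> (\<forall>u\<in>V. \<forall>v\<in>V. E u v \<longleftrightarrow> E' (f u) (f v)))"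

definition C5_V :: "nat set" where "C5_V = {0..<5}"
definition C5_E :: "nat \<Rightarrow> nat \<Rightarrow> bool" where
  "C5_E i j \<longleftrightarrow> i < 5 \<and> j < 5 \<and> (j = (i + 1) mod 5 \<or> i = (j + 1) mod 5)"

definition K_V :: "nat \<Rightarrow> nat \<Rightarrow> nat set" where "K_V m p = {0..<m+p}"
definition K_E :: "nat \<Rightarrow> nat \<Rightarrow> nat \<Rightarrow> nat \<Rightarrow> bool" where
  "K_E m p i j \<longleftrightarrow> i < m + p \<and> j < m + p \<and> ((i < m \<and> m \<le> j) \<or> (j < m \<and> m \<le> i))"

end

theory Submission
  imports Defs
begin

lemma bip_case:
  assumes sg: "simple_graph V E" and cV: "card V = n" and n3: "n \<ge> 3"
    and deg: "\<And>x. x \<in> V \<Longrightarrow> n \<le> 2 * card {y\<in>V. E x y} + 1"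
    and disj: "P \<inter> Q = {}" and un: "P \<union> Q = V"
    and ed: "\<And>x y. E x y \<Longrightarrow> (x \<in> P \<and> y \<in> Q) \<or> (x \<in> Q \<and> y \<in> P)"
    and le: "card P \<le> card Q"
    and nopm: "\<not> has_perfect_matching V E"
  shows "graph_iso V E (K_V ((n - 1) div 2) ((n + 1) div 2)) (K_E ((n - 1) div 2) ((n + 1) div 2))"
proof -
  have finV: "finite V" and Es: "\<And>x y. E x y \<Longrightarrow> x \<in> V \<and> y \<in> V \<and> x \<noteq> y \<and> E y x"
    using sg unfolding simple_graph_def by auto
  have fP: "finite P" and fQ: "finite Q" using finV un by auto
  have sum: "card P + card Q = n" using card_Un_disjoint[OF fP fQ disj] un cV by simp
  obtain y0 where y0: "y0 \<in> Q" using sum le n3 by (metis card.empty all_not_in_conv add_0 le_zero_eq not_numeral_le_zero)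
  have NQ: "\<And>y. y \<in> Q \<Longrightarrow> {x\<in>V. E y x} \<subseteq> P" using ed disj by blast
  have "n \<le> 2 * card {x\<in>V. E y0 x} + 1" using deg y0 un by blast
  moreover have "card {x\<in>V. E y0 x} \<le> card P" using NQ[OF y0] fP by (simp add: card_mono)
  ultimately have nP: "n \<le> 2 * card P + 1" by simp
  have compl: "\<And>x y. x \<in> P \<Longrightarrow> y \<in> Q \<Longrightarrow> E x y"
  proof -
    fix x y assume x: "x \<in> P" and y: "y \<in> Q"
    have "n \<le> 2 * card {x\<in>V. E y x} + 1" using deg y un by blast
    moreover have "2 * card P \<le> n" using sum le by simp
    ultimately have "card P \<le> card {x\<in>V. E y x}" by simp
    moreover have "card {x\<in>V. E y x} \<le> card P" by (rule card_mono[OF fP NQ[OF y]])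
    ultimately have "{x\<in>V. E y x} = P" by (intro card_subset_eq[OF fP NQ[OF y]]) linarith
    thus "E x y" using x Es by blast
  qed
  have Eiff: "\<And>x y. E x y \<longleftrightarrow> (x \<in> P \<and> y \<in> Q) \<or> (x \<in> Q \<and> y \<in> P)"
    using ed compl Es by blast
  have odd: "n = 2 * card P + 1"
  proof (rule ccontr)
    assume "n \<noteq> 2 * card P + 1"
    hence cc: "card P = card Q" using nP sum le by simp
    obtain f where f: "bij_betw f P Q" using finite_same_card_bij[OF fP fQ cc] by blast
    define M where "M = (\<lambda>x. {x, f x}) ` P"
    have "perfect_matching V E M"
      unfolding perfect_matching_def
    proof (intro conjI)
      show "\<forall>e\<in>M. \<exists>u v. e = {u, v} \<and> E u v"
        using f compl unfolding M_def bij_betw_def by blast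
      show "\<forall>e\<in>M. \<forall>g\<in>M. e \<noteq> g \<longrightarrow> e \<inter> g = {}"
      proof (intro ballI impI)
        fix e g assume "e \<in> M" "g \<in> M" "e \<noteq> g"
        then obtain x x' where xx: "x \<in> P" "x' \<in> P" "e = {x, f x}" "g = {x', f x'}" "x \<noteq> x'"
          unfolding M_def by blast
        have "f x \<in> Q" "f x' \<in> Q" "f x \<noteq> f x'" using f xx unfolding bij_betw_def inj_on_def by auto
        thus "e \<inter> g = {}" using xx disj by auto
      qed
      show "\<Union> M = V" using f un unfolding M_def bij_betw_def by auto
    qed
    thus False using nopm unfolding has_perfect_matching_def by blast
  qed
  define m where "m = (n - 1) div 2"
  define p where "p = (n + 1) div 2"
  have m: "m = card P" and p: "p = card Q" using odd sum unfolding m_def p_def by auto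
  have c1: "card P = card {0..<m}" using m by simp
  obtain f1 where f1: "bij_betw f1 P {0..<m}" using finite_same_card_bij[OF fP _ c1] by blast
  have c2: "card Q = card {m..<m+p}" using p by simp
  obtain f2 where f2: "bij_betw f2 Q {m..<m+p}" using finite_same_card_bij[OF fQ _ c2] by blast
  define g where "g x = (if x \<in> P then f1 x else f2 x)" for x
  have "bij_betw g P {0..<m} = bij_betw f1 P {0..<m}" by (rule bij_betw_cong) (simp add: g_def)
  hence g1: "bij_betw g P {0..<m}" using f1 by simp
  have "bij_betw g Q {m..<m+p} = bij_betw f2 Q {m..<m+p}"
    by (rule bij_betw_cong) (use disj in \<open>auto simp: g_def\<close>)
  hence g2: "bij_betw g Q {m..<m+p}" using f2 by simp
  have gb: "bij_betw g V (K_V m p)"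
    using bij_betw_combine[OF g1 g2] un unfolding K_V_def by (simp add: ivl_disj_un)
  have gP: "\<And>x. x \<in> P \<Longrightarrow> g x < m" using g1 unfolding bij_betw_def by auto
  have gQ: "\<And>x. x \<in> Q \<Longrightarrow> m \<le> g x \<and> g x < m + p" using g2 unfolding bij_betw_def by auto
  have "\<forall>x\<in>V. \<forall>y\<in>V. E x y \<longleftrightarrow> K_E m p (g x) (g y)"
  proof (intro ballI)
    fix x y assume "x \<in> V" "y \<in> V"
    thus "E x y \<longleftrightarrow> K_E m p (g x) (g y)"
    proof -
      have hx: "(x \<in> P \<and> g x < m) \<or> (x \<in> Q \<and> m \<le> g x \<and> g x < m + p)" using \<open>x \<in> V\<close> un gP gQ by blast
      have hy: "(y \<in> P \<and> g y < m) \<or> (y \<in> Q \<and> m \<le> g y \<and> g y < m + p)" using \<open>y \<in> V\<close> un gP gQ by blast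
      show ?thesis unfolding Eiff K_E_def using hx hy disj by auto
    qed
  qed
  thus ?thesis using gb unfolding graph_iso_def m_def p_def by blast
qed

theorem theorem5:
  fixes V :: "'a set" and E :: "'a \<Rightarrow> 'a \<Rightarrow> bool" and n :: nat
  assumes "simple_graph V E"
    and "card V = n" and "n \<ge> 3"
    and "real (min_degree V E) \<ge> (real n - 1) / 2"
    and "\<not> has_perfect_matching V E"
    and "triangle_free V E"
  shows "graph_iso V E C5_V C5_E \<or>
         graph_iso V E (K_V ((n - 1) div 2) ((n + 1) div 2)) (K_E ((n - 1) div 2) ((n + 1) div 2))"
proof -
  have finV: "finite V" and Es: "\<And>x y. E x y \<Longrightarrow> x \<in> V \<and> y \<in> V \<and> x \<noteq> y \<and> E y x"
    using assms(1) unfolding simple_graph_def by auto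
  define N where "N x = {y\<in>V. E x y}" for x
  have Vne: "V \<noteq> {}" using assms(2,3) by auto
  have deg: "n \<le> 2 * card (N x) + 1" if x: "x \<in> V" for x
  proof -
    have "min_degree V E \<le> degree V E x" unfolding min_degree_def
      by (rule Min_le) (use finV x in auto)
    hence "real (min_degree V E) \<le> real (degree V E x)" by (simp only: of_nat_le_iff)
    hence "(real n - 1) / 2 \<le> real (degree V E x)" using assms(4) by linarith
    hence "real n - 1 \<le> 2 * real (degree V E x)" by (simp add: field_simps)
    hence "real n \<le> real (2 * degree V E x + 1)" by simp
    hence "n \<le> 2 * degree V E x + 1" by (simp only: of_nat_le_iff)
    thus ?thesis unfolding degree_def N_def .
  qed
  have tf: "\<And>x y z. E x y \<Longrightarrow> E y z \<Longrightarrow> E z x \<Longrightarrow> False"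
    using assms(6) Es unfolding triangle_free_def by blast
  have NV: "\<And>x. N x \<subseteq> V" unfolding N_def by auto
  have fN: "\<And>x. finite (N x)" using NV finV finite_subset by blast
  have inN: "\<And>x y. y \<in> N x \<longleftrightarrow> E x y" unfolding N_def using Es by auto
  have indep: "\<not> E y y'" if "y \<in> N x" "y' \<in> N x" for x y y'
  proof
    assume "E y y'"
    moreover have "E x y" "E x y'" using that inN by auto
    ultimately show False using tf Es by metis
  qed
  obtain u where u: "u \<in> V" using Vne by blast
  have "card (N u) \<ge> 1" using deg[OF u] assms(3) by simp
  hence "N u \<noteq> {}" by auto
  then obtain v where vu: "v \<in> N u" by blast
  have Euv: "E u v" using vu inN by blast
  have uv: "u \<in> N v" using Euv Es inN by auto
  have disj: "N u \<inter> N v = {}"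
  proof (rule ccontr)
    assume "N u \<inter> N v \<noteq> {}"
    then obtain x where "E u x" "E v x" using inN by auto
    thus False using tf Euv Es by metis
  qed
  show ?thesis
  proof (cases "N u \<union> N v = V")
    case True
    have ed: "\<And>x y. E x y \<Longrightarrow> (x \<in> N v \<and> y \<in> N u) \<or> (x \<in> N u \<and> y \<in> N v)"
      using True Es indep by blast
    show ?thesis
    proof (cases "card (N v) \<le> card (N u)")
      case True
      have "graph_iso V E (K_V ((n - 1) div 2) ((n + 1) div 2)) (K_E ((n - 1) div 2) ((n + 1) div 2))"
        by (rule bip_case[OF assms(1,2,3) deg[unfolded N_def], of "N v" "N u"])
          (use disj \<open>N u \<union> N v = V\<close> ed True assms(5) in auto)
      thus ?thesis ..
    next
      case False
      have "graph_iso V E (K_V ((n - 1) div 2) ((n + 1) div 2)) (K_E ((n - 1) div 2) ((n + 1) div 2))"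
        by (rule bip_case[OF assms(1,2,3) deg[unfolded N_def], of "N u" "N v"])
          (use disj \<open>N u \<union> N v = V\<close> ed False assms(5) in auto)
      thus ?thesis ..
    qed
  next
    case False
    then obtain w where w: "w \<in> V" "w \<notin> N u" "w \<notin> N v" using NV by blast
    define k where "k = card (N u)"
    have "N u \<union> N v \<subseteq> V - {w}" using NV w by blast
    hence "card (N u \<union> N v) \<le> card (V - {w})" using finV by (intro card_mono) auto
    also have "\<dots> = n - 1" using w finV assms(2) by simp
    finally have "card (N u) + card (N v) \<le> n - 1" using card_Un_disjoint[OF fN fN disj] by simp
    moreover have "n \<le> 2 * card (N u) + 1" using deg u by blast
    moreover have "n \<le> 2 * card (N v) + 1" using deg Es Euv by blast
    ultimately have nk: "n = 2 * k + 1" and kv: "card (N v) = k" unfolding k_def using assms(3) by auto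
    have k1: "k \<ge> 1" using nk assms(3) by simp
    have Vdec: "V = N u \<union> N v \<union> {w}"
    proof -
      have sub: "N u \<union> N v \<union> {w} \<subseteq> V" using NV w by blast
      have "card (N u \<union> N v \<union> {w}) = card (N u \<union> N v) + 1"
        using w fN by (simp add: card_insert_if)
      also have "\<dots> = n" using card_Un_disjoint[OF fN fN disj] kv nk k_def by simp
      finally show ?thesis using card_subset_eq[OF finV sub] assms(2) by simp
    qed
    have degk: "\<And>x. x \<in> V \<Longrightarrow> k \<le> card (N x)" using deg nk by fastforce
    have wu: "u \<notin> N w" using w inN Es by blast
    have wv: "v \<notin> N w" using w inN Es by blast
    have ww: "w \<notin> N w" using inN Es by blast
    define A where "A = N w \<inter> N u"
    define B where "B = N w \<inter> N v"
    have fA: "finite A" and fB: "finite B" using fN unfolding A_def B_def by auto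
    have NwAB: "N w \<subseteq> A \<union> B"
    proof
      fix x assume x: "x \<in> N w"
      hence "x \<in> V" "x \<noteq> w" using NV ww by auto
      hence "x \<in> N u \<or> x \<in> N v" using Vdec by auto
      thus "x \<in> A \<union> B" using x unfolding A_def B_def by auto
    qed
    have "card (N w) \<le> card (A \<union> B)" using NwAB fA fB by (intro card_mono) auto
    also have "\<dots> \<le> card A + card B" by (rule card_Un_le)
    finally have "card (N w) \<le> card A + card B" .
    hence sumAB: "k \<le> card A + card B" using degk[OF w(1)] by simp
    have "A \<subseteq> N u - {v}" using wv unfolding A_def by auto
    hence cA: "card A \<le> k - 1" using card_mono[OF _ \<open>A \<subseteq> N u - {v}\<close>] fN vu k_def by simp
    have "B \<subseteq> N v - {u}" using wu unfolding B_def by auto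
    hence cB: "card B \<le> k - 1" using card_mono[OF _ \<open>B \<subseteq> N v - {u}\<close>] fN uv kv by simp
    have BNv: "B \<subseteq> N v" and ANu: "A \<subseteq> N u" unfolding A_def B_def by auto
    have Ny: "N y \<subseteq> (N v - B) \<union> {w}" if y: "y \<in> A" for y
    proof
      fix x assume x: "x \<in> N y"
      have yu: "y \<in> N u" "E w y" using y inN unfolding A_def by auto
      have Eyx: "E y x" using x inN by auto
      have "x \<notin> N u" using indep[of y u x] yu Eyx by auto
      moreover have "x \<in> V" using x NV by auto
      ultimately have "x \<in> N v \<or> x = w" using Vdec by auto
      moreover have "x \<notin> B"
      proof
        assume "x \<in> B"
        hence "E w x" using inN unfolding B_def by auto
        thus False using tf[of w x y] Es[OF Eyx] Es[OF yu(2)] by auto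
      qed
      ultimately show "x \<in> (N v - B) \<union> {w}" by blast
    qed
    have Nz: "N z \<subseteq> (N u - A) \<union> {w}" if z: "z \<in> B" for z
    proof
      fix x assume x: "x \<in> N z"
      have zv: "z \<in> N v" "E w z" using z inN unfolding B_def by auto
      have Ezx: "E z x" using x inN by auto
      have "x \<notin> N v" using indep[of z v x] zv Ezx by auto
      moreover have "x \<in> V" using x NV by auto
      ultimately have "x \<in> N u \<or> x = w" using Vdec by auto
      moreover have "x \<notin> A"
      proof
        assume "x \<in> A"
        hence "E w x" using inN unfolding A_def by auto
        thus False using tf[of w x z] Es[OF Ezx] Es[OF zv(2)] by auto
      qed
      ultimately show "x \<in> (N u - A) \<union> {w}" by blast
    qed
    have cNvB: "card ((N v - B) \<union> {w}) \<le> k - card B + 1"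
    proof -
      have "card ((N v - B) \<union> {w}) \<le> card (N v - B) + card {w}" by (rule card_Un_le)
      also have "card (N v - B) = k - card B" using card_Diff_subset[OF fB BNv] kv by simp
      finally show ?thesis by simp
    qed
    have cNuA: "card ((N u - A) \<union> {w}) \<le> k - card A + 1"
    proof -
      have "card ((N u - A) \<union> {w}) \<le> card (N u - A) + card {w}" by (rule card_Un_le)
      also have "card (N u - A) = k - card A" using card_Diff_subset[OF fA ANu] k_def by simp
      finally show ?thesis by simp
    qed
    have Bsmall: "card B \<le> 1" if y: "y \<in> A" for y
    proof -
      have "k \<le> card (N y)" using degk y NV unfolding A_def by auto
      also have "\<dots> \<le> card ((N v - B) \<union> {w})" using Ny[OF y] fN by (intro card_mono) auto
      finally show ?thesis using cNvB card_mono[OF fN BNv] kv by linarith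
    qed
    have Asmall: "card A \<le> 1" if z: "z \<in> B" for z
    proof -
      have "k \<le> card (N z)" using degk z NV unfolding B_def by auto
      also have "\<dots> \<le> card ((N u - A) \<union> {w})" using Nz[OF z] fN by (intro card_mono) auto
      finally show ?thesis using cNuA card_mono[OF fN ANu] k_def by linarith
    qed
    have "A \<noteq> {}" using sumAB cB k1 by (cases "A = {}") auto
    then obtain y0 where "y0 \<in> A" by blast
    have "B \<noteq> {}" using sumAB cA k1 by (cases "B = {}") auto
    then obtain z0 where "z0 \<in> B" by blast
    have cA1: "card A \<le> 1" using Asmall \<open>z0 \<in> B\<close> .
    have cB1: "card B \<le> 1" using Bsmall \<open>y0 \<in> A\<close> .
    have "card A \<ge> 1" using \<open>A \<noteq> {}\<close> fA by (simp add: Suc_le_eq card_gt_0_iff)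
    hence k2: "k = 2" and cA2: "card A = 1" and cB2: "card B = 1" using cA1 cB1 sumAB cA by linarith+
    obtain y where Ay: "A = {y}" using cA2 by (rule card_1_singletonE)
    obtain z where Bz: "B = {z}" using cB2 by (rule card_1_singletonE)
    have yu: "y \<in> N u" and yw: "y \<in> N w" and zv: "z \<in> N v" and zw: "z \<in> N w"
      using Ay Bz unfolding A_def B_def by auto
    have vy: "v \<noteq> y" using yw wv by auto
    have uz: "u \<noteq> z" using zw wu by auto
    have "{v, y} = N u"
      by (rule card_subset_eq[OF fN]) (use vu yu vy k2 k_def in auto)
    hence NU: "N u = {v, y}" ..
    have "{u, z} = N v"
      by (rule card_subset_eq[OF fN]) (use uv zv uz k2 kv in auto)
    hence NVv: "N v = {u, z}" ..
    have NW: "N w = {y, z}" using NwAB Ay Bz yw zw by auto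
    have NY: "N y = {u, w}"
    proof
      show "N y \<subseteq> {u, w}" using Ny[of y] Ay Bz NVv uz by auto
      show "{u, w} \<subseteq> N y" using yu yw inN Es by auto
    qed
    have NZ: "N z = {v, w}"
    proof
      show "N z \<subseteq> {v, w}" using Nz[of z] Ay Bz NU vy by auto
      show "{v, w} \<subseteq> N z" using zv zw inN Es by auto
    qed
    have VV: "V = {u, v, w, y, z}" using Vdec NU NVv by auto
    have d: "u \<noteq> v" "u \<noteq> w" "u \<noteq> y" "u \<noteq> z" "v \<noteq> w" "v \<noteq> y" "v \<noteq> z"
      "w \<noteq> y" "w \<noteq> z" "y \<noteq> z"
      using w uv vu yu zv yw zw vy uz disj inN Es by auto
    have EU: "\<And>x. E u x \<longleftrightarrow> x = v \<or> x = y" using inN NU by auto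
    have EV: "\<And>x. E v x \<longleftrightarrow> x = u \<or> x = z" using inN NVv by auto
    have EW: "\<And>x. E w x \<longleftrightarrow> x = y \<or> x = z" using inN NW by auto
    have EY: "\<And>x. E y x \<longleftrightarrow> x = u \<or> x = w" using inN NY by auto
    have EZ: "\<And>x. E z x \<longleftrightarrow> x = v \<or> x = w" using inN NZ by auto
    define g where "g x = (if x = u then 0 else if x = v then 1 else if x = z then 2
      else if x = w then (3::nat) else 4)" for x
    have gb: "bij_betw g V C5_V"
      unfolding bij_betw_def VV C5_V_def
    proof
      show "inj_on g {u, v, w, y, z}" using d by (auto simp: g_def inj_on_def)
      show "g ` {u, v, w, y, z} = {0..<5}" using d by (auto simp: g_def)
    qed
    have "\<forall>x\<in>V. \<forall>x'\<in>V. E x x' \<longleftrightarrow> C5_E (g x) (g x')"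
    proof (intro ballI)
      fix x x' assume "x \<in> V" "x' \<in> V"
      hence "x = u \<or> x = v \<or> x = w \<or> x = y \<or> x = z" "x' = u \<or> x' = v \<or> x' = w \<or> x' = y \<or> x' = z"
        using VV by auto
      thus "E x x' \<longleftrightarrow> C5_E (g x) (g x')"
        using d d[symmetric] by (elim disjE) (simp_all add: EU EV EW EY EZ g_def C5_E_def)
    qed
    hence "graph_iso V E C5_V C5_E" using gb unfolding graph_iso_def by blast
    thus ?thesis ..
  qed
qed

end
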